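(* Let $\mathcal{H}$ be a real Hilbert space, $A:\mathcal{H}\rightrightarrows\mathcal{H}$ maximal monotone, $p\geq2$ an integer and $\theta\in(0,1)$. Let $\Omega=\{x\in\mathcal{H}:0\notin Ax\}$ and, for $x\in\Omega$, let $\Lambda_\theta(x)$ be the unique $\lambda>0$ with $\lambda^{1/(p-1)}\|x-(I+\lambda A)^{-1}x\|=\theta^{1/(p-1)}$. Define on $\mathcal{H}$ \[ \Gamma_\theta(x)=\Big(\inf\{\alpha>0:\|x-(I+\alpha^{-1}A)^{-1}x\|\leq\alpha^{\frac1{p-1}}\theta^{\frac1{p-1}}\}\Big)^{\frac1{p-1}}. \] Then $\Gamma_\theta(x)=(1/\Lambda_\theta(x))^{1/(p-1)}$ if $x\in\Omega$ and $\Gamma_\theta(x)=0$ otherwise, and $\Gamma_\theta$ is Lipschitz continuous on $\mathcal{H}$ with constant $\theta^{-1/(p-1)}$.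
   Context: $(I+\lambda A)^{-1}$ is the resolvent of $A$ of index $\lambda>0$. For $x\in\Omega$, the map $\lambda\mapsto\lambda^{1/(p-1)}\|x-(I+\lambda A)^{-1}x\|$ is a continuous strictly increasing bijection of $[0,\infty)$ onto $[0,\infty)$, so $\Lambda_\theta$ is well defined. *)

theory Defs
  imports "HOL-Analysis.Analysis"
begin

definition monotone_operator :: "('a::real_inner \<Rightarrow> 'a set) \<Rightarrow> bool" where
  "monotone_operator A \<longleftrightarrow>
     (\<forall>x y u v. u \<in> A x \<longrightarrow> v \<in> A y \<longrightarrow> inner (x - y) (u - v) \<ge> 0)"

definition maximal_monotone :: "('a::real_inner \<Rightarrow> 'a set) \<Rightarrow> bool" where
  "maximal_monotone A \<longleftrightarrow> monotone_operator A \<and>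
     (\<forall>B. monotone_operator B \<and> (\<forall>x. A x \<subseteq> B x) \<longrightarrow> B = A)"

text \<open>Resolvent (I + lam A)^{-1} x: the y with x \<in> y + lam A y, i.e. (x - y)/lam \<in> A y.\<close>
definition resolvent :: "('a::real_inner \<Rightarrow> 'a set) \<Rightarrow> real \<Rightarrow> 'a \<Rightarrow> 'a" where
  "resolvent A lam x = (THE y. (1 / lam) *\<^sub>R (x - y) \<in> A y)"

definition Lambda_theta :: "('a::real_inner \<Rightarrow> 'a set) \<Rightarrow> nat \<Rightarrow> real \<Rightarrow> 'a \<Rightarrow> real" where
  "Lambda_theta A p \<theta> x = (THE lam. lam > 0 \<and>
      lam powr (1 / (real p - 1)) * norm (x - resolvent A lam x) = \<theta> powr (1 / (real p - 1)))"

definition Gamma_theta :: "('a::real_inner \<Rightarrow> 'a set) \<Rightarrow> nat \<Rightarrow> real \<Rightarrow> 'a \<Rightarrow> real" where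
  "Gamma_theta A p \<theta> x =
     (Inf {\<alpha>::real. \<alpha> > 0 \<and>
        norm (x - resolvent A (1 / \<alpha>) x) \<le> \<alpha> powr (1 / (real p - 1)) * \<theta> powr (1 / (real p - 1))})
     powr (1 / (real p - 1))"

end

theory Submission
  imports Defs
begin


lemma hilbert_FIP:
  fixes K :: "'i \<Rightarrow> 'a::{real_inner,complete_space} set"
  assumes cl: "\<And>i. i\<in>I \<Longrightarrow> closed (K i)" and cv: "\<And>i. i\<in>I \<Longrightarrow> convex (K i)"
    and jz: "jz \<in> I" "bounded (K jz)"
    and fip: "\<And>F. finite F \<Longrightarrow> F \<subseteq> I \<Longrightarrow> (\<Inter>i\<in>insert jz F. K i) \<noteq> {}"
  shows "\<exists>y. \<forall>i\<in>I. y \<in> K i"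
proof -
  define D where "D F = (\<Inter>i\<in>insert jz F. K i)" for F
  define r where "r F = Inf ((\<lambda>y. (norm y)^2) ` D F)" for F
  define \<F> where "\<F> = {F. finite F \<and> F \<subseteq> I}"
  obtain B where B: "\<And>y. y \<in> K jz \<Longrightarrow> norm y \<le> B" using jz(2) bounded_iff by blast
  have Dne: "D F \<noteq> {}" if "F \<in> \<F>" for F using fip that unfolding D_def \<F>_def by auto
  have Dsub: "D F \<subseteq> K jz" for F unfolding D_def by auto
  have Dmono: "D G \<subseteq> D F" if "F \<subseteq> G" for F G using that unfolding D_def by auto
  have Dconv: "convex (D F)" if "F \<in> \<F>" for F
    unfolding D_def using that jz cv unfolding \<F>_def by (intro convex_INT) auto
  have bdd: "bdd_below ((\<lambda>y. (norm y)^2) ` D F)" for F by (rule bdd_belowI[of _ 0]) auto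
  have r_le: "r F \<le> (norm y)^2" if "y \<in> D F" for F y
    unfolding r_def using that bdd by (intro cInf_lower) auto
  have r_ex: "\<exists>y\<in>D F. (norm y)^2 < r F + e" if "F \<in> \<F>" "e > 0" for F e
  proof -
    have "Inf ((\<lambda>y. (norm y)^2) ` D F) < r F + e" unfolding r_def using that by simp
    then show ?thesis using Dne[OF that(1)] bdd unfolding r_def by (subst (asm) cInf_less_iff) auto
  qed
  have r_mono: "r F \<le> r G" if "F \<subseteq> G" "G \<in> \<F>" for F G
    unfolding r_def using Dne[OF that(2)] Dmono[OF that(1)] bdd
    by (intro cInf_superset_mono) auto
  have r_B: "r F \<le> B^2" if FF: "F \<in> \<F>" for F
  proof -
    obtain y where "y \<in> D F" using Dne[OF FF] by auto
    then have "r F \<le> (norm y)^2" by (rule r_le)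
    also have "\<dots> \<le> B^2" using B[of y] Dsub \<open>y \<in> D F\<close> by (intro power_mono) auto
    finally show ?thesis .
  qed
  have r_ex': "\<exists>y. y \<in> D F \<and> (norm y)^2 < r F + 1/(real n + 1)" if "F \<in> \<F>" for F n
  proof -
    have "(0::real) < 1/(real n + 1)" by simp
    from r_ex[OF that this] show ?thesis by blast
  qed
  have emptyF: "{} \<in> \<F>" unfolding \<F>_def by auto
  define s where "s = Sup (r ` \<F>)"
  have bddr: "bdd_above (r ` \<F>)" using r_B by (intro bdd_aboveI[of _ "B^2"]) auto
  have r_s: "r F \<le> s" if "F \<in> \<F>" for F unfolding s_def using bddr that by (intro cSup_upper) auto
  have key: "(norm (y - y'))^2 \<le> 2 * (norm y)^2 + 2 * (norm y')^2 - 4 * r F"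
    if "F \<subseteq> G" "G \<in> \<F>" "F \<in> \<F>" "y \<in> D F" "y' \<in> D G" for F G y y'
  proof -
    have "y' \<in> D F" using Dmono[OF that(1)] that(5) by auto
    then have "(1/2) *\<^sub>R y + (1/2) *\<^sub>R y' \<in> D F"
      using Dconv[OF that(3)] that(4) unfolding convex_def by auto
    then have "r F \<le> (norm ((1/2) *\<^sub>R y + (1/2) *\<^sub>R y'))^2" by (rule r_le)
    also have "(norm ((1/2) *\<^sub>R y + (1/2) *\<^sub>R y'))^2 = (norm (y + y'))^2 / 4"
    proof -
      have "(1/2) *\<^sub>R y + (1/2) *\<^sub>R y' = (1/2) *\<^sub>R (y + y')" by (simp add: scaleR_add_right)
      then show ?thesis by (simp add: power2_eq_square)
    qed
    finally have "4 * r F \<le> (norm (y + y'))^2" by simp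
    moreover have "(norm (y - y'))^2 + (norm (y + y'))^2 = 2 * (norm y)^2 + 2 * (norm y')^2"
      by (simp add: power2_norm_eq_inner inner_simps)
    ultimately show ?thesis by linarith
  qed
  have approx: "\<exists>F\<in>\<F>. s - e < r F" if "e > 0" for e
  proof -
    have "s - e < s" using that by simp
    then show ?thesis unfolding s_def using bddr emptyF by (subst (asm) less_cSup_iff) auto
  qed
  have "\<forall>n. \<exists>F. F \<in> \<F> \<and> s - 1/(real n + 1) < r F"
  proof
    fix n :: nat
    have "(0::real) < 1/(real n + 1)" by simp
    from approx[OF this] show "\<exists>F. F \<in> \<F> \<and> s - 1/(real n + 1) < r F" by blast
  qed
  then obtain Fs where Fs: "\<And>n. Fs n \<in> \<F> \<and> s - 1/(real n + 1) < r (Fs n)"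
    by metis
  define Gs where "Gs n = (\<Union>k\<le>n. Fs k)" for n
  have Gs_F: "Gs n \<in> \<F>" for n using Fs unfolding Gs_def \<F>_def by auto
  have Gs_mono: "Gs n \<subseteq> Gs m" if "n \<le> m" for n m using that unfolding Gs_def by (auto intro: order_trans)
  have Gs_r: "s - 1/(real n + 1) < r (Gs n)" for n
  proof -
    have "Fs n \<subseteq> Gs n" unfolding Gs_def by auto
    then have "r (Fs n) \<le> r (Gs n)" using Gs_F by (intro r_mono) auto
    then show ?thesis using Fs[of n] by linarith
  qed
  have "\<forall>n. \<exists>y. y \<in> D (Gs n) \<and> (norm y)^2 < r (Gs n) + 1/(real n + 1)"
    using r_ex'[OF Gs_F] by blast
  then obtain ys where ys: "\<And>n. ys n \<in> D (Gs n) \<and> (norm (ys n))^2 < r (Gs n) + 1/(real n + 1)"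
    by metis
  have cauchy_est: "(norm (ys n - ys m))^2 < 6/(real n + 1)" if "n \<le> m" for n m
  proof -
    have "(norm (ys n - ys m))^2 \<le> 2 * (norm (ys n))^2 + 2 * (norm (ys m))^2 - 4 * r (Gs n)"
      using ys[of n] ys[of m] Gs_F Gs_mono[OF that] by (intro key[of _ "Gs m"]) auto
    moreover have "1/(real m + 1) \<le> 1/(real n + 1)" using that by (simp add: frac_le)
    moreover have "r (Gs m) \<le> s" using r_s Gs_F by auto
    ultimately show ?thesis using ys[of n] ys[of m] Gs_r[of n] by linarith
  qed
  have small: "\<exists>M. \<forall>n\<ge>M. 6/(real n + 1) < e^2" if "e > 0" for e :: real
  proof -
    obtain M :: nat where M: "6 / e^2 < real M" using reals_Archimedean2 by blast
    have "6/(real n + 1) < e^2" if "n \<ge> M" for n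
    proof -
      have "6 / e^2 < real n + 1" using M that by linarith
      then show ?thesis using \<open>e > 0\<close> by (simp add: field_simps)
    qed
    then show ?thesis by blast
  qed
  have sq_lt: "norm x < e" if "(norm x)^2 < e^2" "e > 0" for x :: 'a and e :: real
    using that by (meson abs_norm_cancel power2_less_imp_less less_eq_real_def)
  have "Cauchy ys"
  proof (rule metric_CauchyI)
    fix e :: real assume "e > 0"
    then obtain M where M: "\<forall>n\<ge>M. 6/(real n + 1) < e^2" using small by blast
    have "dist (ys m) (ys n) < e" if "m \<ge> M" "n \<ge> M" for m n
    proof (cases "m \<le> n")
      case True
      then have "(norm (ys m - ys n))^2 < e^2" using cauchy_est[OF True] M that by fastforce
      then show ?thesis using \<open>e > 0\<close> sq_lt by (simp add: dist_norm)
    next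
      case False
      then have "(norm (ys n - ys m))^2 < e^2" using cauchy_est[of n m] M that by fastforce
      then show ?thesis using \<open>e > 0\<close> sq_lt by (simp add: dist_norm norm_minus_commute)
    qed
    then show "\<exists>M. \<forall>m\<ge>M. \<forall>n\<ge>M. dist (ys m) (ys n) < e" by blast
  qed
  then obtain y where y: "ys \<longlonglongrightarrow> y" using Cauchy_convergent_iff convergent_def by blast
  have "y \<in> K i" if "i \<in> I" for i
  proof -
    define Hs where "Hs n = insert i (Gs n)" for n
    have Hs_F: "Hs n \<in> \<F>" for n using Gs_F that unfolding Hs_def \<F>_def by auto
    have "\<forall>n. \<exists>z. z \<in> D (Hs n) \<and> (norm z)^2 < r (Hs n) + 1/(real n + 1)"
      using r_ex'[OF Hs_F] by blast
    then obtain zs where zs: "\<And>n. zs n \<in> D (Hs n) \<and> (norm (zs n))^2 < r (Hs n) + 1/(real n + 1)"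
      by metis
    have est: "(norm (zs n - ys n))^2 < 6/(real n + 1)" for n
    proof -
      have "(norm (ys n - zs n))^2 \<le> 2 * (norm (ys n))^2 + 2 * (norm (zs n))^2 - 4 * r (Gs n)"
        using ys[of n] zs[of n] Gs_F Hs_F by (intro key[of _ "Hs n"]) (auto simp: Hs_def)
      moreover have "r (Hs n) \<le> s" using r_s Hs_F by auto
      ultimately show ?thesis using ys[of n] zs[of n] Gs_r[of n] by (simp add: norm_minus_commute)
    qed
    have "(\<lambda>n. zs n - ys n) \<longlonglongrightarrow> 0"
      unfolding LIMSEQ_iff
    proof (intro allI impI)
      fix e :: real assume "e > 0"
      then obtain M where M: "\<forall>n\<ge>M. 6/(real n + 1) < e^2" using small by blast
      then show "\<exists>no. \<forall>n\<ge>no. norm (zs n - ys n - 0) < e"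
        using est sq_lt \<open>e > 0\<close> by (metis diff_zero less_trans)
    qed
    then have "(\<lambda>n. (zs n - ys n) + ys n) \<longlonglongrightarrow> 0 + y" using y by (intro tendsto_add)
    then have zy: "zs \<longlonglongrightarrow> y" by simp
    have "\<forall>n. zs n \<in> K i" using zs unfolding D_def Hs_def by auto
    then show ?thesis using closed_sequentially[OF cl[OF that]] zy by blast
  qed
  then show ?thesis by blast
qed


lemma double_sum_mono:
  fixes S :: "('a::real_inner \<times> 'a) set" and \<mu> :: "'a \<times> 'a \<Rightarrow> real"
  assumes fin: "finite S" and nn: "\<And>s. s \<in> S \<Longrightarrow> 0 \<le> \<mu> s" and s1: "sum \<mu> S = 1"
    and mono: "\<And>a b a' b'. (a,b) \<in> S \<Longrightarrow> (a',b') \<in> S \<Longrightarrow> inner (a - a') (b - b') \<ge> 0"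
  shows "inner (\<Sum>s\<in>S. \<mu> s *\<^sub>R fst s) (\<Sum>s\<in>S. \<mu> s *\<^sub>R snd s) \<le> (\<Sum>s\<in>S. \<mu> s * inner (fst s) (snd s))"
proof -
  define X where "X = (\<Sum>s\<in>S. \<Sum>t\<in>S. \<mu> s * \<mu> t * inner (fst s - fst t) (snd s - snd t))"
  have "X \<ge> 0" unfolding X_def
    proof (intro sum_nonneg mult_nonneg_nonneg)
    fix x y assume "x \<in> S" "y \<in> S"
    then show "0 \<le> \<mu> x" "0 \<le> \<mu> y" using nn by auto
    show "0 \<le> inner (fst x - fst y) (snd x - snd y)" using mono[of "fst x" "snd x" "fst y" "snd y"] \<open>x \<in> S\<close> \<open>y \<in> S\<close> by simp
  qed
  have e1: "inner (\<Sum>s\<in>S. \<mu> s *\<^sub>R fst s) (\<Sum>s\<in>S. \<mu> s *\<^sub>R snd s) = (\<Sum>s\<in>S. \<Sum>t\<in>S. \<mu> s * \<mu> t * inner (fst t) (snd s))"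
    by (simp add: inner_sum_left inner_sum_right sum_distrib_left mult.assoc)
  have e2: "inner (\<Sum>s\<in>S. \<mu> s *\<^sub>R fst s) (\<Sum>s\<in>S. \<mu> s *\<^sub>R snd s) = (\<Sum>s\<in>S. \<Sum>t\<in>S. \<mu> s * \<mu> t * inner (fst s) (snd t))"
    unfolding e1 by (subst sum.swap) (simp add: ac_simps)
  have e3: "(\<Sum>s\<in>S. \<mu> s * inner (fst s) (snd s)) = (\<Sum>s\<in>S. \<Sum>t\<in>S. \<mu> s * \<mu> t * inner (fst s) (snd s))"
    by (simp add: sum_distrib_right[symmetric] sum_distrib_left[symmetric] s1 mult.commute mult.left_commute)
  have e4: "(\<Sum>s\<in>S. \<mu> s * inner (fst s) (snd s)) = (\<Sum>s\<in>S. \<Sum>t\<in>S. \<mu> s * \<mu> t * inner (fst t) (snd t))"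
    unfolding e3 by (subst sum.swap) (simp add: ac_simps)
  have "X = 2 * (\<Sum>s\<in>S. \<mu> s * inner (fst s) (snd s)) - 2 * inner (\<Sum>s\<in>S. \<mu> s *\<^sub>R fst s) (\<Sum>s\<in>S. \<mu> s *\<^sub>R snd s)"
  proof -
    have "X = (\<Sum>s\<in>S. \<Sum>t\<in>S. \<mu> s * \<mu> t * inner (fst s) (snd s)) + (\<Sum>s\<in>S. \<Sum>t\<in>S. \<mu> s * \<mu> t * inner (fst t) (snd t))
       - (\<Sum>s\<in>S. \<Sum>t\<in>S. \<mu> s * \<mu> t * inner (fst s) (snd t)) - (\<Sum>s\<in>S. \<Sum>t\<in>S. \<mu> s * \<mu> t * inner (fst t) (snd s))"
      unfolding X_def by (simp add: inner_diff_left inner_diff_right algebra_simps sum.distrib sum_subtractf)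
    then show ?thesis using e1 e2 e3 e4 by linarith
  qed
  then show ?thesis using \<open>X \<ge> 0\<close> by linarith
qed

lemma finite_DF:
  fixes S :: "('a::real_inner \<times> 'a) set"
  assumes fin: "finite S"
    and mono: "\<And>a b a' b'. (a,b) \<in> S \<Longrightarrow> (a',b') \<in> S \<Longrightarrow> inner (a - a') (b - b') \<ge> 0"
  shows "\<exists>y. \<forall>(a,b)\<in>S. inner (y - a) (y + b) \<le> 0"
proof (cases "S = {}")
  case True then show ?thesis by auto
next
  case False
  define f :: "'a \<times> 'a \<Rightarrow> 'a \<times> 'a \<times> real" where "f = (\<lambda>(a,b). (a, b, inner a b))"
  define P where "P = f ` S"
  define K where "K = convex hull P"
  define G :: "'a \<times> 'a \<times> real \<Rightarrow> real" where
    "G = (\<lambda>q. - ((norm (fst q - fst (snd q)))^2) / 4 - snd (snd q))"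
  have finP: "finite P" using fin unfolding P_def by auto
  have "compact K" unfolding K_def using finP by (rule finite_imp_compact_convex_hull)
  moreover have "K \<noteq> {}" unfolding K_def P_def using False by simp
  moreover have "continuous_on K G" unfolding G_def by (intro continuous_intros) auto
  ultimately obtain q where qK: "q \<in> K" and qmax: "\<And>q'. q' \<in> K \<Longrightarrow> G q' \<le> G q"
    using continuous_attains_sup by metis
  have injf: "inj_on f S" unfolding f_def inj_on_def by auto
  have A: "G q \<le> 0"
  proof -
    obtain u where u: "\<forall>x\<in>P. 0 \<le> u x" "sum u P = 1" "(\<Sum>x\<in>P. u x *\<^sub>R x) = q"
      using qK unfolding K_def convex_hull_finite[OF finP] by blast
    define \<mu> where "\<mu> = u \<circ> f"
    have nn: "\<And>s. s \<in> S \<Longrightarrow> 0 \<le> \<mu> s" using u(1) unfolding \<mu>_def P_def by auto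
    have s1: "sum \<mu> S = 1" using u(2) unfolding \<mu>_def P_def by (simp add: sum.reindex[OF injf])
    have q_eq: "q = (\<Sum>s\<in>S. \<mu> s *\<^sub>R f s)" using u(3) unfolding \<mu>_def P_def
      by (simp add: sum.reindex[OF injf])
    define ab where "ab = (\<Sum>s\<in>S. \<mu> s *\<^sub>R fst s)"
    define bb where "bb = (\<Sum>s\<in>S. \<mu> s *\<^sub>R snd s)"
    have q1: "fst q = ab" unfolding q_eq ab_def fst_sum by (simp add: f_def case_prod_beta)
    have q2: "fst (snd q) = bb" unfolding q_eq bb_def snd_sum fst_sum by (simp add: f_def case_prod_beta)
    have q3: "snd (snd q) = (\<Sum>s\<in>S. \<mu> s * inner (fst s) (snd s))" unfolding q_eq snd_sum
      by (simp add: f_def case_prod_beta)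
    have "inner ab bb \<le> (\<Sum>s\<in>S. \<mu> s * inner (fst s) (snd s))"
      unfolding ab_def bb_def using fin nn s1 mono by (rule double_sum_mono)
    moreover have "(norm (ab + bb))^2 = (norm (ab - bb))^2 + 4 * inner ab bb"
      by (simp add: power2_norm_eq_inner inner_simps inner_commute)
    moreover have "(norm (ab + bb))^2 \<ge> 0" by simp
    ultimately show ?thesis unfolding G_def using q1 q2 q3 by simp
  qed
  define D where "D = fst q - fst (snd q)"
  define y where "y = (1/2) *\<^sub>R D"
  have "inner (y - a) (y + b) \<le> 0" if ab: "(a,b) \<in> S" for a b
  proof -
    define E where "E = (a - b) - D"
    define e where "e = inner a b - snd (snd q)"
    define X where "X = - inner D E / 2 - e"
    have fK: "f (a,b) \<in> K" unfolding K_def P_def using ab by (intro hull_inc) auto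
    have step: "X \<le> t * (norm E)^2 / 4" if t: "0 < t" "t \<le> 1" for t
    proof -
      define qt where "qt = (1 - t) *\<^sub>R q + t *\<^sub>R f (a,b)"
      have "qt \<in> K" unfolding qt_def K_def using qK fK t unfolding K_def
        by (intro convexD_alt[OF convex_convex_hull]) auto
      then have le: "G qt \<le> G q" by (rule qmax)
      have d1: "fst qt - fst (snd qt) = D + t *\<^sub>R E"
        unfolding qt_def D_def E_def f_def by (simp add: algebra_simps)
      have d2: "snd (snd qt) = snd (snd q) + t * e"
        unfolding qt_def e_def f_def by (simp add: algebra_simps)
      have nE: "(norm (D + t *\<^sub>R E))^2 = (norm D)^2 + 2 * t * inner D E + t^2 * (norm E)^2"
        unfolding power2_norm_eq_inner by (simp add: inner_simps inner_commute algebra_simps power2_eq_square)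
      have "G qt = G q + t * X - t^2 * (norm E)^2 / 4"
        unfolding G_def d1 d2 D_def[symmetric] X_def nE
        by (simp add: field_simps)
      then have "t * (X - t * (norm E)^2 / 4) \<le> 0" using le by (simp add: algebra_simps power2_eq_square)
      then show ?thesis using t by (simp add: mult_le_0_iff)
    qed
    have "X \<le> 0"
    proof (rule ccontr)
      assume "\<not> X \<le> 0"
      then have X0: "X > 0" by simp
      define c where "c = (norm E)^2 / 4"
      have c0: "c \<ge> 0" unfolding c_def by simp
      define t where "t = min 1 (X / (c + 1))"
      have t0: "0 < t" "t \<le> 1" unfolding t_def using X0 c0 by auto
      have "t * c \<le> X / (c + 1) * c" unfolding t_def using c0 by (intro mult_right_mono) auto
      also have "\<dots> < X" using X0 c0 by (simp add: field_simps)
      finally have "t * c < X" .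
      moreover have "X \<le> t * c" using step[OF t0] unfolding c_def by simp
      ultimately show False by simp
    qed
    moreover have "inner (y - a) (y + b) = G q + X"
      unfolding y_def G_def D_def[symmetric] X_def E_def e_def
      by (simp add: power2_norm_eq_inner inner_simps inner_commute algebra_simps)
    ultimately show ?thesis using A by simp
  qed
  then show ?thesis by blast
qed



lemma maximal_extend:
  assumes mm: "maximal_monotone A" and h: "\<And>a b. b \<in> A a \<Longrightarrow> inner (y - a) (v - b) \<ge> 0"
  shows "v \<in> A y"
proof -
  define B where "B = A(y := insert v (A y))"
  have monoA: "monotone_operator A" using mm unfolding maximal_monotone_def by auto
  have "monotone_operator B" unfolding monotone_operator_def
  proof (intro allI impI)
    fix x1 x2 u1 u2 assume u1: "u1 \<in> B x1" and u2: "u2 \<in> B x2"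
    have h': "inner (a - y) (b - v) \<ge> 0" if "b \<in> A a" for a b
    proof -
      have "inner (a - y) (b - v) = inner (y - a) (v - b)"
        by (simp add: inner_diff_left inner_diff_right)
      then show ?thesis using h[OF that] by simp
    qed
    consider "u1 \<in> A x1" "u2 \<in> A x2" | "x1 = y" "u1 = v" "u2 \<in> A x2" | "u1 \<in> A x1" "x2 = y" "u2 = v"
      | "x1 = y" "u1 = v" "x2 = y" "u2 = v"
      using u1 u2 unfolding B_def by (auto split: if_splits)
    then show "inner (x1 - x2) (u1 - u2) \<ge> 0"
    proof cases
      case 1 then show ?thesis using monoA unfolding monotone_operator_def by blast
    next
      case 2 then show ?thesis using h by auto
    next
      case 3 then show ?thesis using h' by auto
    next
      case 4 then show ?thesis by simp
    qed
  qed
  moreover have "\<forall>x. A x \<subseteq> B x" unfolding B_def by auto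
  ultimately have "B = A" using mm unfolding maximal_monotone_def by blast
  then show ?thesis unfolding B_def by (metis fun_upd_same insertI1)
qed

lemma maxmono_nonempty:
  assumes mm: "maximal_monotone A" shows "\<exists>a b. b \<in> A a"
proof (rule ccontr)
  assume "\<not> ?thesis"
  then have "\<And>a b. b \<in> A a \<Longrightarrow> inner (0 - a) (0 - b) \<ge> 0" by auto
  then have "0 \<in> A 0" by (rule maximal_extend[OF mm])
  with \<open>\<not> ?thesis\<close> show False by auto
qed

lemma ball_eq:
  fixes y a c :: "'a::real_inner"
  shows "inner (y - a) (y + c) \<le> 0 \<longleftrightarrow> y \<in> cball ((1/2) *\<^sub>R (a - c)) (norm (a + c) / 2)"
proof -
  have e: "inner (y - a) (y + c) = (norm ((1/2) *\<^sub>R (a - c) - y))^2 - (norm (a + c) / 2)^2"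
    unfolding power2_norm_eq_inner power_divide
    by (simp add: inner_simps inner_commute algebra_simps power2_eq_square)
  have "dist ((1/2) *\<^sub>R (a - c)) y \<le> norm (a + c) / 2 \<longleftrightarrow>
        (norm ((1/2) *\<^sub>R (a - c) - y))^2 \<le> (norm (a + c) / 2)^2"
    by (simp add: dist_norm abs_le_square_iff[symmetric])
  then show ?thesis unfolding e mem_cball by linarith
qed

lemma minty:
  fixes A :: "'a::{real_inner,complete_space} \<Rightarrow> 'a set"
  assumes mm: "maximal_monotone A" and lam: "lam > 0"
  shows "\<exists>y. (1/lam) *\<^sub>R (x - y) \<in> A y"
proof -
  have monoA: "monotone_operator A" using mm unfolding maximal_monotone_def by auto
  define I where "I = {(a, lam *\<^sub>R b - x) | a b. b \<in> A a}"
  define K where "K = (\<lambda>(a::'a, c).  cball ((1/2) *\<^sub>R (a - c)) (norm (a + c) / 2 :: real))"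
  obtain a0 b0 where ab0: "b0 \<in> A a0" using maxmono_nonempty[OF mm] by auto
  have monoI: "inner (a - a') (c - c') \<ge> 0" if ac: "(a,c) \<in> I" "(a',c') \<in> I" for a c a' c'
  proof -
    obtain b b' where "b \<in> A a" "b' \<in> A a'" "c = lam *\<^sub>R b - x" "c' = lam *\<^sub>R b' - x"
      using ac unfolding I_def by auto
    moreover have "inner (a - a') (b - b') \<ge> 0" using monoA calculation unfolding monotone_operator_def by blast
    moreover have "lam *\<^sub>R b - x - (lam *\<^sub>R b' - x) = lam *\<^sub>R (b - b')" by (simp add: algebra_simps)
    ultimately show ?thesis using lam by (simp only:) (simp add: inner_scaleR_right)
  qed
  have "\<exists>y. \<forall>i\<in>I. y \<in> K i"
  proof (rule hilbert_FIP[where jz = "(a0, lam *\<^sub>R b0 - x)"])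
    show "closed (K i)" "convex (K i)" for i by (cases i, simp add: K_def)+
    show "(a0, lam *\<^sub>R b0 - x) \<in> I" unfolding I_def using ab0 by auto
    show "bounded (K (a0, lam *\<^sub>R b0 - x))" unfolding K_def by simp
    show "(\<Inter>i\<in>insert (a0, lam *\<^sub>R b0 - x) F. K i) \<noteq> {}" if "finite F" "F \<subseteq> I" for F
    proof -
      have sub: "insert (a0, lam *\<^sub>R b0 - x) F \<subseteq> I" using that(2) \<open>(a0, lam *\<^sub>R b0 - x) \<in> I\<close> by auto
      have fin': "finite (insert (a0, lam *\<^sub>R b0 - x) F)" using that(1) by simp
      have mono': "inner (a - a') (c - c') \<ge> 0" if "(a,c) \<in> insert (a0, lam *\<^sub>R b0 - x) F"
        "(a',c') \<in> insert (a0, lam *\<^sub>R b0 - x) F" for a c a' c'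
        by (rule monoI[OF subsetD[OF sub that(1)] subsetD[OF sub that(2)]])
      obtain y where y: "\<forall>(a,c)\<in>insert (a0, lam *\<^sub>R b0 - x) F. inner (y - a) (y + c) \<le> 0"
        using finite_DF[OF fin' mono'] by blast
      have "y \<in> K i" if i: "i \<in> insert (a0, lam *\<^sub>R b0 - x) F" for i
      proof -
        obtain a c where ac: "i = (a, c)" by (cases i)
        then have "inner (y - a) (y + c) \<le> 0" using y i by auto
        then show ?thesis unfolding ac K_def by (simp only: ball_eq prod.case)
      qed
      then have "y \<in> (\<Inter>i\<in>insert (a0, lam *\<^sub>R b0 - x) F. K i)" by blast
      then show ?thesis by blast
    qed
  qed
  then obtain y where y: "\<forall>i\<in>I. y \<in> K i" by blast
  have "inner (y - a) ((1/lam) *\<^sub>R (x - y) - b) \<ge> 0" if "b \<in> A a" for a b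
  proof -
    have "(a, lam *\<^sub>R b - x) \<in> I" unfolding I_def using that by auto
    then have "y \<in> K (a, lam *\<^sub>R b - x)" using y by blast
    then have "inner (y - a) (y + (lam *\<^sub>R b - x)) \<le> 0" unfolding K_def by (simp only: ball_eq prod.case)
    moreover have "(1/lam) *\<^sub>R (x - y) - b = (- (1/lam)) *\<^sub>R (y + (lam *\<^sub>R b - x))"
      using lam by (simp add: algebra_simps)
    ultimately have "inner (y - a) ((1/lam) *\<^sub>R (x - y) - b) = (- (1/lam)) * inner (y - a) (y + (lam *\<^sub>R b - x))"
      by (simp only: inner_scaleR_right)
    moreover have "- (1/lam) \<le> 0" using lam by simp
    ultimately show ?thesis using \<open>inner (y - a) (y + (lam *\<^sub>R b - x)) \<le> 0\<close> by (simp only: mult_nonpos_nonpos)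
  qed
  then have "(1/lam) *\<^sub>R (x - y) \<in> A y" by (rule maximal_extend[OF mm])
  then show ?thesis by blast
qed



lemma res_unique:
  assumes mm: "maximal_monotone A" and lam: "lam > 0"
    and y: "(1/lam) *\<^sub>R (x - y) \<in> A y" and z: "(1/lam) *\<^sub>R (x - z) \<in> A z"
  shows "y = z"
proof -
  have "inner (y - z) ((1/lam) *\<^sub>R (x - y) - (1/lam) *\<^sub>R (x - z)) \<ge> 0"
    using mm y z unfolding maximal_monotone_def monotone_operator_def by blast
  moreover have "(1/lam) *\<^sub>R (x - y) - (1/lam) *\<^sub>R (x - z) = - (1/lam) *\<^sub>R (y - z)"
    by (simp add: algebra_simps)
  ultimately have "- (1/lam) * inner (y - z) (y - z) \<ge> 0" by simp
  then have "inner (y - z) (y - z) \<le> 0" using lam by (simp add: divide_le_0_iff)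
  then have "inner (y - z) (y - z) = 0" using inner_ge_zero[of "y - z"] by linarith
  then show ?thesis by simp
qed

lemma res_prop:
  fixes A :: "'a::{real_inner,complete_space} \<Rightarrow> 'a set"
  assumes mm: "maximal_monotone A" and lam: "lam > 0"
  shows "(1/lam) *\<^sub>R (x - resolvent A lam x) \<in> A (resolvent A lam x)"
proof -
  have "\<exists>!y. (1/lam) *\<^sub>R (x - y) \<in> A y"
    using minty[OF mm lam, of x] res_unique[OF mm lam] by blast
  then show ?thesis unfolding resolvent_def by (rule theI')
qed

lemma res_eq:
  fixes A :: "'a::{real_inner,complete_space} \<Rightarrow> 'a set"
  assumes mm: "maximal_monotone A" and lam: "lam > 0" and y: "(1/lam) *\<^sub>R (x - y) \<in> A y"
  shows "resolvent A lam x = y"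
  using res_unique[OF mm lam res_prop[OF mm lam] y] .

lemma res_fix:
  fixes A :: "'a::{real_inner,complete_space} \<Rightarrow> 'a set"
  assumes mm: "maximal_monotone A" and lam: "lam > 0" and "0 \<in> A x"
  shows "resolvent A lam x = x"
  using res_eq[OF mm lam, of x x] assms by simp

lemma res_pos:
  fixes A :: "'a::{real_inner,complete_space} \<Rightarrow> 'a set"
  assumes mm: "maximal_monotone A" and lam: "lam > 0" and "0 \<notin> A x"
  shows "norm (x - resolvent A lam x) > 0"
  using res_prop[OF mm lam, of x] assms by (cases "resolvent A lam x = x") auto

lemma res_nonexp:
  fixes A :: "'a::{real_inner,complete_space} \<Rightarrow> 'a set"
  assumes mm: "maximal_monotone A" and lam: "lam > 0"
  shows "norm ((x - resolvent A lam x) - (x' - resolvent A lam x')) \<le> norm (x - x')"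
proof -
  define u where "u = x - resolvent A lam x"
  define u' where "u' = x' - resolvent A lam x'"
  have "inner (resolvent A lam x - resolvent A lam x') ((1/lam) *\<^sub>R u - (1/lam) *\<^sub>R u') \<ge> 0"
    using mm res_prop[OF mm lam, of x] res_prop[OF mm lam, of x'] unfolding u_def u'_def
      maximal_monotone_def monotone_operator_def by blast
  moreover have "resolvent A lam x - resolvent A lam x' = (x - x') - (u - u')"
    unfolding u_def u'_def by simp
  moreover have "(1/lam) *\<^sub>R u - (1/lam) *\<^sub>R u' = (1/lam) *\<^sub>R (u - u')" by (simp add: algebra_simps)
  ultimately have "(1/lam) * inner ((x - x') - (u - u')) (u - u') \<ge> 0" by simp
  then have "inner ((x - x') - (u - u')) (u - u') \<ge> 0" using lam by (simp add: zero_le_divide_iff)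
  then have "(norm (u - u'))^2 \<le> inner (x - x') (u - u')"
    by (simp add: inner_diff_left power2_norm_eq_inner)
  also have "\<dots> \<le> norm (x - x') * norm (u - u')" by (rule norm_cauchy_schwarz)
  finally have "norm (u - u') * norm (u - u') \<le> norm (x - x') * norm (u - u')"
    by (simp add: power2_eq_square)
  then have "norm (u - u') \<le> norm (x - x')"
    by (cases "norm (u - u') = 0") (auto simp: mult_le_cancel_right)
  then show ?thesis unfolding u_def u'_def .
qed

lemma res_lip:
  fixes A :: "'a::{real_inner,complete_space} \<Rightarrow> 'a set"
  assumes mm: "maximal_monotone A" and lam: "lam > 0"
  shows "norm (x' - resolvent A lam x') \<le> norm (x - resolvent A lam x) + norm (x - x')"
  using res_nonexp[OF mm lam, of x x'] norm_triangle_ineq3[of "x - resolvent A lam x" "x' - resolvent A lam x'"]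
  by (smt (verit) norm_triangle_ineq2 norm_minus_commute)

lemma res_mono:
  fixes A :: "'a::{real_inner,complete_space} \<Rightarrow> 'a set"
  assumes mm: "maximal_monotone A" and mu: "0 < mu" and ml: "mu \<le> lam"
  shows "norm (x - resolvent A mu x) \<le> norm (x - resolvent A lam x)
       \<and> mu * norm (x - resolvent A lam x) \<le> lam * norm (x - resolvent A mu x)"
proof -
  have lam: "lam > 0" using mu ml by simp
  define u where "u = x - resolvent A lam x"
  define v where "v = x - resolvent A mu x"
  have "inner (resolvent A lam x - resolvent A mu x) ((1/lam) *\<^sub>R u - (1/mu) *\<^sub>R v) \<ge> 0"
    using mm res_prop[OF mm lam, of x] res_prop[OF mm mu, of x] unfolding u_def v_def
      maximal_monotone_def monotone_operator_def by blast
  moreover have "resolvent A lam x - resolvent A mu x = v - u" unfolding u_def v_def by simp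
  ultimately have "inner (v - u) ((1/lam) *\<^sub>R u - (1/mu) *\<^sub>R v) \<ge> 0" by simp
  then have "inner v u / lam - inner v v / mu - inner u u / lam + inner u v / mu \<ge> 0"
    by (simp add: inner_diff_left inner_diff_right algebra_simps)
  then have "0 \<le> lam * mu * (inner v u / lam - inner v v / mu - inner u u / lam + inner u v / mu)"
    using lam mu by simp
  also have "\<dots> = mu * inner u v - lam * inner v v - mu * inner u u + lam * inner u v"
    using lam mu by (simp add: field_simps inner_commute)
  finally have i1: "lam * inner v v + mu * inner u u \<le> (lam + mu) * inner u v" by (simp add: algebra_simps)
  define a where "a = norm u"
  define b where "b = norm v"
  have a0: "a \<ge> 0" and b0: "b \<ge> 0" unfolding a_def b_def by auto
  have "inner u v \<le> a * b" unfolding a_def b_def by (rule norm_cauchy_schwarz)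
  then have "(lam + mu) * inner u v \<le> (lam + mu) * (a * b)" using lam mu by (intro mult_left_mono) auto
  with i1 have key: "lam * b^2 + mu * a^2 \<le> (lam + mu) * (a * b)"
    unfolding a_def b_def by (simp add: power2_norm_eq_inner)
  have kk: "(b * lam - a * mu) * (b - a) \<le> 0" using key by (simp add: algebra_simps power2_eq_square)
  have ba: "b \<le> a"
  proof (rule ccontr)
    assume "\<not> b \<le> a"
    then have "b > a" by simp
    then have "b * lam > a * lam" using lam by simp
    moreover have "a * lam \<ge> a * mu" using a0 ml by (simp add: mult_left_mono)
    ultimately have "(b * lam - a * mu) * (b - a) > 0" using \<open>b > a\<close> by simp
    with kk show False by simp
  qed
  have "mu * a \<le> lam * b"
  proof (rule ccontr)
    assume "\<not> mu * a \<le> lam * b"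
    then have h: "a * mu > b * lam" by (simp add: mult.commute)
    have "b * lam \<ge> b * mu" using b0 ml by (simp add: mult_left_mono)
    then have "a * mu > b * mu" using h by simp
    then have "a > b" using mu by simp
    then have "(b * lam - a * mu) * (b - a) > 0" using h by (simp add: mult_neg_neg)
    with kk show False by simp
  qed
  with ba show ?thesis unfolding a_def b_def u_def v_def by simp
qed



theorem lemma2p3:
  fixes A :: "'a::{real_inner, complete_space} \<Rightarrow> 'a set"
    and p :: nat and \<theta> :: real
  assumes "maximal_monotone A"
    and "p \<ge> 2"
    and "0 < \<theta>" and "\<theta> < 1"
  shows "(\<forall>x. Gamma_theta A p \<theta> x =
            (if 0 \<notin> A x then (1 / Lambda_theta A p \<theta> x) powr (1 / (real p - 1)) else 0))
         \<and> (\<theta> powr (- 1 / (real p - 1)))-lipschitz_on UNIV (Gamma_theta A p \<theta>)"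
proof -
  note mm = assms(1)
  have th0: "\<theta> > 0" using assms(3) .
  define q where "q = 1 / (real p - 1)"
  have p1: "real p - 1 \<ge> 1" using assms(2) by simp
  have q0: "q > 0" unfolding q_def using p1 by simp
  define d where "d lam x = norm (x - resolvent A lam x)" for lam x
  define h where "h x lam = lam powr q * d lam x" for x lam
  define \<Lambda> where "\<Lambda> x = Lambda_theta A p \<theta> x" for x
  have d_nn: "d lam x \<ge> 0" for lam x unfolding d_def by simp
  have d_mono: "d mu x \<le> d lam x" if "0 < mu" "mu \<le> lam" for mu lam x
    using res_mono[OF mm that] unfolding d_def by blast
  have d_mono2: "mu * d lam x \<le> lam * d mu x" if "0 < mu" "mu \<le> lam" for mu lam x
    using res_mono[OF mm that] unfolding d_def by blast
  have d_pos: "d lam x > 0" if "0 < lam" "0 \<notin> A x" for lam x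
    using res_pos[OF mm that] unfolding d_def .
  have d_zero: "d lam x = 0" if "0 < lam" "0 \<in> A x" for lam x
    using res_fix[OF mm that] unfolding d_def by simp
  have d_lip: "d lam y \<le> d lam x + norm (x - y)" if "0 < lam" for lam x y
    using res_lip[OF mm that] unfolding d_def .
  have h_strict: "h x mu < h x lam" if "0 \<notin> A x" "0 < mu" "mu < lam" for x mu lam
  proof -
    have "h x mu \<le> mu powr q * d lam x" unfolding h_def
      using d_mono[of mu lam x] that by (intro mult_left_mono) auto
    also have "\<dots> < lam powr q * d lam x"
      using powr_less_mono2[OF q0, of mu lam] d_pos[of lam x] that by (intro mult_strict_right_mono) auto
    finally show ?thesis unfolding h_def .
  qed
  have h_cont: "continuous_on {a..b} (h x)" if "0 < a" for a b x
  proof -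
    have "(d b x / a)-lipschitz_on {a..b} (\<lambda>lam. d lam x)"
    proof (rule lipschitz_onI)
      show "0 \<le> d b x / a" using d_nn that by simp
      have one: "\<bar>d lam x - d mu x\<bar> \<le> d b x / a * \<bar>lam - mu\<bar>"
        if "mu \<in> {a..b}" "lam \<in> {a..b}" "mu \<le> lam" for mu lam
      proof -
        have mu0: "mu > 0" using that \<open>0 < a\<close> by simp
        have dm: "d mu x \<le> d lam x" using d_mono mu0 that by blast
        have "mu * d lam x \<le> lam * d mu x" using d_mono2 mu0 that by blast
        then have "mu * (d lam x - d mu x) \<le> (lam - mu) * d mu x" by (simp add: algebra_simps)
        also have "\<dots> \<le> (lam - mu) * d b x" using that d_mono[of mu b x] mu0
          by (intro mult_left_mono) auto
        finally have f1: "mu * (d lam x - d mu x) \<le> (lam - mu) * d b x" .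
        have f2: "a * (d lam x - d mu x) \<le> mu * (d lam x - d mu x)"
          using that dm by (intro mult_right_mono) auto
        from f1 f2 have "a * (d lam x - d mu x) \<le> (lam - mu) * d b x" by linarith
        then have "d lam x - d mu x \<le> (lam - mu) * d b x / a" using \<open>0 < a\<close>
          by (simp add: field_simps)
        then show ?thesis using dm that by (simp add: field_simps)
      qed
      fix u v assume "u \<in> {a..b}" "v \<in> {a..b}"
      then show "dist (d u x) (d v x) \<le> d b x / a * dist u v"
        using one[of u v] one[of v u] unfolding dist_real_def
        by (cases "u \<le> v") (auto simp: abs_minus_commute)
    qed
    then have c1: "continuous_on {a..b} (\<lambda>lam. d lam x)" by (rule lipschitz_on_continuous_on)
    have c2: "continuous_on {a..b} (\<lambda>lam. lam powr q)"
      using that by (intro continuous_intros) auto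
    show ?thesis unfolding h_def[abs_def] using c1 c2 by (intro continuous_on_mult) auto
  qed
  have Lam: "\<Lambda> x > 0 \<and> h x (\<Lambda> x) = \<theta> powr q" if x: "0 \<notin> A x" for x
  proof -
    have ex: "\<exists>lam. lam > 0 \<and> h x lam = \<theta> powr q"
    proof -
      define d1 where "d1 = d 1 x"
      have d10: "d1 > 0" unfolding d1_def using d_pos x by simp
      define ls where "ls = (\<theta> powr q / d1) powr (1/q)"
      have ls0: "ls > 0" unfolding ls_def using th0 d10 by simp
      have lsq: "ls powr q = \<theta> powr q / d1"
        unfolding ls_def powr_powr using q0 th0 d10 by simp
      define l1 where "l1 = min 1 ls"
      define l2 where "l2 = max 1 ls"
      have l10: "l1 > 0" unfolding l1_def using ls0 by simp
      have h1: "h x l1 \<le> \<theta> powr q"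
      proof -
        have "h x l1 \<le> ls powr q * d1" unfolding h_def d1_def
        proof (rule mult_mono)
          show "l1 powr q \<le> ls powr q" using l10 q0 by (intro powr_mono2) (auto simp: l1_def)
          show "d l1 x \<le> d 1 x" using l10 by (intro d_mono) (auto simp: l1_def)
        qed (auto simp: d_nn)
        also have "\<dots> = \<theta> powr q" using lsq d10 by simp
        finally show ?thesis .
      qed
      have h2: "\<theta> powr q \<le> h x l2"
      proof -
        have "\<theta> powr q = ls powr q * d1" using lsq d10 by simp
        also have "\<dots> \<le> h x l2" unfolding h_def d1_def
        proof (rule mult_mono)
          show "ls powr q \<le> l2 powr q" using ls0 q0 by (intro powr_mono2) (auto simp: l2_def)
          show "d 1 x \<le> d l2 x" by (intro d_mono) (auto simp: l2_def)
        qed (auto simp: d_nn)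
        finally show ?thesis .
      qed
      have "l1 \<le> l2" unfolding l1_def l2_def by simp
      then obtain lam where "l1 \<le> lam" "lam \<le> l2" "h x lam = \<theta> powr q"
        using IVT'[of "h x" l1 "\<theta> powr q" l2] h1 h2 h_cont[OF l10] by blast
      then show ?thesis using l10 by (intro exI[of _ lam]) auto
    qed
    have uniq: "lam = lam'" if "lam > 0 \<and> h x lam = \<theta> powr q" "lam' > 0 \<and> h x lam' = \<theta> powr q" for lam lam'
      using h_strict[OF x, of lam lam'] h_strict[OF x, of lam' lam] that by (cases lam lam' rule: linorder_cases) auto
    have "\<exists>!lam. lam > 0 \<and> h x lam = \<theta> powr q" using ex uniq by blast
    then have "\<Lambda> x > 0 \<and> h x (\<Lambda> x) = \<theta> powr q"
      unfolding \<Lambda>_def Lambda_theta_def h_def d_def q_def by (rule theI')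
    then show ?thesis .
  qed
  have Lam_char: "h x lam \<le> \<theta> powr q \<longleftrightarrow> lam \<le> \<Lambda> x" if x: "0 \<notin> A x" and lam: "lam > 0" for x lam
  proof
    assume "h x lam \<le> \<theta> powr q"
    then show "lam \<le> \<Lambda> x" using h_strict[OF x, of "\<Lambda> x" lam] Lam[OF x] by force
  next
    assume "lam \<le> \<Lambda> x"
    then show "h x lam \<le> \<theta> powr q" using h_strict[OF x lam, of "\<Lambda> x"] Lam[OF x]
      by (cases "lam = \<Lambda> x") auto
  qed
  have hdiv: "h x (1/\<alpha>) = d (1/\<alpha>) x / \<alpha> powr q" if "\<alpha> > 0" for x \<alpha>
    unfolding h_def using that by (simp add: powr_divide)
  have Gf: "Gamma_theta A p \<theta> x = (if 0 \<notin> A x then (1 / \<Lambda> x) powr q else 0)" for x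
  proof -
    define S where "S = {\<alpha>::real. \<alpha> > 0 \<and> norm (x - resolvent A (1/\<alpha>) x) \<le> \<alpha> powr q * \<theta> powr q}"
    have G: "Gamma_theta A p \<theta> x = Inf S powr q" unfolding Gamma_theta_def S_def q_def ..
    have Sd: "S = {\<alpha>. \<alpha> > 0 \<and> d (1/\<alpha>) x \<le> \<alpha> powr q * \<theta> powr q}" unfolding S_def d_def ..
    show ?thesis
    proof (cases "0 \<in> A x")
      case True
      have "S = {0<..}" unfolding Sd using d_zero[OF _ True] by auto
      then show ?thesis using G True q0 by simp
    next
      case False
      have "S = {1 / \<Lambda> x..}"
      proof (intro set_eqI iffI)
        fix \<alpha> assume "\<alpha> \<in> S"
        then have a0: "\<alpha> > 0" and le: "d (1/\<alpha>) x \<le> \<alpha> powr q * \<theta> powr q" unfolding Sd by auto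
        have "h x (1/\<alpha>) \<le> \<theta> powr q" unfolding hdiv[OF a0] using le a0
          by (simp add: pos_divide_le_eq mult.commute)
        then have "1/\<alpha> \<le> \<Lambda> x" using Lam_char[OF False] a0 by simp
        then show "\<alpha> \<in> {1 / \<Lambda> x..}" using a0 Lam[OF False] by (simp add: field_simps)
      next
        fix \<alpha> assume "\<alpha> \<in> {1 / \<Lambda> x..}"
        then have a1: "1 / \<Lambda> x \<le> \<alpha>" by simp
        have L0: "\<Lambda> x > 0" using Lam[OF False] by simp
        then have a0: "\<alpha> > 0" using a1 by (meson less_le_trans zero_less_divide_1_iff)
        have "1/\<alpha> \<le> \<Lambda> x" using a1 a0 L0 by (simp add: field_simps)
        then have "h x (1/\<alpha>) \<le> \<theta> powr q" using Lam_char[OF False] a0 by simp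
        then have "d (1/\<alpha>) x \<le> \<alpha> powr q * \<theta> powr q" unfolding hdiv[OF a0] using a0
          by (simp add: pos_divide_le_eq mult.commute)
        then show "\<alpha> \<in> S" unfolding Sd using a0 by simp
      qed
      then show ?thesis using G False by simp
    qed
  qed
  define \<Gamma> where "\<Gamma> = Gamma_theta A p \<theta>"
  have Gnn: "\<Gamma> x \<ge> 0" for x unfolding \<Gamma>_def Gf by simp
  define C where "C = \<theta> powr (- 1 / (real p - 1))"
  have C_eq: "C = 1 / \<theta> powr q" unfolding C_def q_def
    by (simp add: powr_minus divide_inverse)
  have C0: "C > 0" unfolding C_eq using th0 by simp
  have step: "\<Gamma> y \<le> \<Gamma> x + C * norm (x - y)" for x y
  proof (cases "0 \<in> A y")
    case True
    then have "\<Gamma> y = 0" unfolding \<Gamma>_def Gf by simp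
    then show ?thesis using Gnn[of x] C0 by simp
  next
    case yA: False
    show ?thesis
    proof (cases "x = y")
      case True then show ?thesis by simp
    next
      case False
      define \<delta> where "\<delta> = norm (x - y)"
      have \<delta>0: "\<delta> > 0" unfolding \<delta>_def using False by simp
      define T where "T = \<Gamma> x + C * \<delta>"
      have T0: "T > 0" unfolding T_def using Gnn[of x] mult_pos_pos[OF C0 \<delta>0] by linarith
      define lam where "lam = (1/T) powr (1/q)"
      have lam0: "lam > 0" unfolding lam_def using T0 by simp
      have lamq: "lam powr q = 1/T" unfolding lam_def powr_powr using q0 T0 by simp
      have ilamq: "(1/lam) powr q = T" using lamq lam0 T0 by (simp add: powr_divide)
      have c1: "d lam x \<le> \<theta> powr q * \<Gamma> x"
      proof (cases "0 \<in> A x")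
        case True
        then show ?thesis using d_zero[OF lam0 True] Gnn[of x] th0 by simp
      next
        case xA: False
        have L0: "\<Lambda> x > 0" and hL: "h x (\<Lambda> x) = \<theta> powr q" using Lam[OF xA] by auto
        have Gx: "\<Gamma> x = (1 / \<Lambda> x) powr q" unfolding \<Gamma>_def Gf using xA by simp
        have "(1 / \<Lambda> x) powr q \<le> (1/lam) powr q" unfolding ilamq using Gx T_def C0 \<delta>0 by simp
        then have "1 / \<Lambda> x \<le> 1/lam"
          using powr_less_mono2[OF q0, of "1/lam" "1 / \<Lambda> x"] lam0 by force
        then have "lam \<le> \<Lambda> x" using lam0 L0 by (simp add: field_simps)
        then have "d lam x \<le> d (\<Lambda> x) x" using d_mono lam0 by blast
        also have "d (\<Lambda> x) x = \<theta> powr q * \<Gamma> x"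
        proof -
          have "\<Lambda> x powr q * d (\<Lambda> x) x = \<theta> powr q" using hL unfolding h_def .
          moreover have "\<Gamma> x = 1 / \<Lambda> x powr q" unfolding Gx using L0 by (simp add: powr_divide)
          ultimately have "\<theta> powr q * \<Gamma> x = (\<Lambda> x powr q * d (\<Lambda> x) x) / \<Lambda> x powr q" by simp
          moreover have "\<Lambda> x powr q > 0" using L0 by simp
          ultimately show ?thesis by simp
        qed
        finally show ?thesis .
      qed
      have "d lam y \<le> d lam x + \<delta>" unfolding \<delta>_def by (rule d_lip[OF lam0])
      also have "\<dots> \<le> \<theta> powr q * \<Gamma> x + \<delta>" using c1 by simp
      also have "\<dots> = \<theta> powr q * T" unfolding T_def C_eq using th0 by (simp add: field_simps)
      finally have "d lam y \<le> \<theta> powr q * T" .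
      then have "h y lam \<le> \<theta> powr q" unfolding h_def lamq using T0 by (simp add: field_simps)
      then have "lam \<le> \<Lambda> y" using Lam_char[OF yA lam0] by simp
      then have "1 / \<Lambda> y \<le> 1 / lam" using lam0 by (simp add: field_simps)
      then have "(1 / \<Lambda> y) powr q \<le> (1/lam) powr q" using Lam[OF yA] q0 by (intro powr_mono2) auto
      then show ?thesis unfolding ilamq T_def \<delta>_def \<Gamma>_def Gf using yA by simp
    qed
  qed
  have lip: "C-lipschitz_on UNIV \<Gamma>"
  proof (rule lipschitz_onI)
    fix x y :: 'a
    show "dist (\<Gamma> x) (\<Gamma> y) \<le> C * dist x y"
      using step[of x y] step[of y x] unfolding dist_real_def dist_norm
      by (simp add: abs_le_iff norm_minus_commute)
    show "0 \<le> C" using C0 by simp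
  qed
  show ?thesis using Gf lip unfolding \<Gamma>_def C_def \<Lambda>_def q_def by simp
qed

end
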